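(* Let $G\subseteq O(d)$ be a subgroup and let $\mathcal{F}$ be a fan in $\mathbb{R}^d$ that is $G$-invariant, i.e. $\mathcal{F}=\{gC:C\in\mathcal{F}\}$ for all $g\in G$. If $\mathcal{F}$ is inscribable, then there is an inscribed polytope $P$ with normal fan $\mathcal{F}$ such that $gP=P$ for all $g\in G$.
   Context: A fan $\mathcal{F}$ is inscribable if there is a polytope whose vertices lie on a common sphere and whose normal fan equals $\mathcal{F}$. *)

theory Defs
  imports "HOL-Analysis.Analysis"
begin

definition polyhedral_cone :: "'a::euclidean_space set \<Rightarrow> bool" where
  "polyhedral_cone C \<longleftrightarrow> cone C \<and> polyhedron C"

definition is_fan :: "'a::euclidean_space set set \<Rightarrow> bool" where
  "is_fan \<F> \<longleftrightarrow> finite \<F> \<and>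
     (\<forall>C\<in>\<F>. polyhedral_cone C) \<and>
     (\<forall>C\<in>\<F>. \<forall>F. F face_of C \<and> F \<noteq> {} \<longrightarrow> F \<in> \<F>) \<and>
     (\<forall>C\<in>\<F>. \<forall>D\<in>\<F>. (C \<inter> D) face_of C \<and> (C \<inter> D) face_of D)"

definition normal_cone :: "'a::euclidean_space set \<Rightarrow> 'a set \<Rightarrow> 'a set" where
  "normal_cone P F = {c. \<forall>x\<in>F. \<forall>y\<in>P. c \<bullet> y \<le> c \<bullet> x}"

definition normal_fan :: "'a::euclidean_space set \<Rightarrow> 'a set set" where
  "normal_fan P = {normal_cone P F | F. F face_of P \<and> F \<noteq> {}}"

definition inscribed :: "'a::euclidean_space set \<Rightarrow> bool" where
  "inscribed P \<longleftrightarrow> polytope P \<and>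
     (\<exists>z r. \<forall>v. v extreme_point_of P \<longrightarrow> v \<in> sphere z r)"

definition inscribable :: "'a::euclidean_space set set \<Rightarrow> bool" where
  "inscribable \<F> \<longleftrightarrow> (\<exists>P. inscribed P \<and> normal_fan P = \<F>)"

definition orthogonal_subgroup :: "('a::euclidean_space \<Rightarrow> 'a) set \<Rightarrow> bool" where
  "orthogonal_subgroup G \<longleftrightarrow>
     (\<forall>g\<in>G. orthogonal_transformation g) \<and> id \<in> G \<and>
     (\<forall>g\<in>G. \<forall>h\<in>G. g \<circ> h \<in> G) \<and> (\<forall>g\<in>G. inv g \<in> G)"

end

theory Submission
  imports Defs
begin


definition Am :: "'a::euclidean_space set \<Rightarrow> 'a \<Rightarrow> 'a set" where
  "Am V c = {v\<in>V. \<forall>u\<in>V. c \<bullet> u \<le> c \<bullet> v}"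

definition compat :: "'a::euclidean_space set \<Rightarrow> ('a \<Rightarrow> 'a) \<Rightarrow> bool" where
  "compat V f \<longleftrightarrow> (\<forall>c. Am (f ` V) c = f ` (Am V c))"

lemma Am_subset: "Am V c \<subseteq> V"
  by (auto simp: Am_def)

lemma Am_nonempty:
  assumes "finite V" "V \<noteq> {}" shows "Am V c \<noteq> {}"
proof -
  let ?m = "Max ((\<lambda>v. c \<bullet> v) ` V)"
  have "?m \<in> (\<lambda>v. c \<bullet> v) ` V" using assms by (intro Max_in) auto
  then obtain v where v: "v \<in> V" "c \<bullet> v = ?m" by auto
  have "\<forall>u\<in>V. c \<bullet> u \<le> c \<bullet> v" using v assms by auto
  then show ?thesis using v by (auto simp: Am_def)
qed

lemma Am_zero: "Am V 0 = V"
  by (auto simp: Am_def)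

lemma sphere_inner_less:
  fixes u v :: "'a::euclidean_space"
  assumes "u \<in> sphere 0 r" "v \<in> sphere 0 r" "u \<noteq> v"
  shows "v \<bullet> u < v \<bullet> v"
proof -
  have nu: "u \<bullet> u = r\<^sup>2" "v \<bullet> v = r\<^sup>2" using assms
    by (auto simp: dot_square_norm)
  have "0 < (v - u) \<bullet> (v - u)" using assms(3) by simp
  then have "0 < v \<bullet> v - 2 * (v \<bullet> u) + u \<bullet> u"
    by (simp add: inner_diff_left inner_diff_right inner_commute)
  then show ?thesis using nu by simp
qed

lemma Am_sphere_self:
  assumes "V \<subseteq> sphere 0 r" "v \<in> V"
  shows "Am V v = {v}"
proof -
  have "v \<bullet> u \<le> v \<bullet> v" if "u \<in> V" for u
    using sphere_inner_less[of u r v] assms that by (cases "u = v") (auto simp: subset_iff)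
  moreover have "x = v" if "x \<in> V" "\<forall>w\<in>V. v \<bullet> w \<le> v \<bullet> x" for x
  proof (rule ccontr)
    assume "x \<noteq> v"
    then have "v \<bullet> x < v \<bullet> v" using sphere_inner_less[of x r v] assms that by (auto simp: subset_iff)
    with that assms(2) show False by force
  qed
  ultimately show ?thesis using assms(2) unfolding Am_def by auto
qed

lemma Am_lex:
  "v \<in> Am (Am V c) c' \<longleftrightarrow> v \<in> V \<and> (\<forall>u\<in>V. c \<bullet> u < c \<bullet> v \<or> (c \<bullet> u = c \<bullet> v \<and> c' \<bullet> u \<le> c' \<bullet> v))"
proof
  assume H: "v \<in> Am (Am V c) c'"
  then have v: "v \<in> V" "\<forall>u\<in>V. c \<bullet> u \<le> c \<bullet> v" "\<forall>u\<in>Am V c. c' \<bullet> u \<le> c' \<bullet> v"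
    by (auto simp: Am_def)
  have "c \<bullet> u < c \<bullet> v \<or> (c \<bullet> u = c \<bullet> v \<and> c' \<bullet> u \<le> c' \<bullet> v)" if u: "u \<in> V" for u
  proof (cases "c \<bullet> u < c \<bullet> v")
    case False
    then have eq: "c \<bullet> u = c \<bullet> v" using v(2) u by force
    then have "u \<in> Am V c" using v(2) u by (auto simp: Am_def)
    then show ?thesis using v(3) eq by auto
  qed simp
  then show "v \<in> V \<and> (\<forall>u\<in>V. c \<bullet> u < c \<bullet> v \<or> (c \<bullet> u = c \<bullet> v \<and> c' \<bullet> u \<le> c' \<bullet> v))"
    using v by blast
next
  assume H: "v \<in> V \<and> (\<forall>u\<in>V. c \<bullet> u < c \<bullet> v \<or> (c \<bullet> u = c \<bullet> v \<and> c' \<bullet> u \<le> c' \<bullet> v))"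
  then have v: "v \<in> Am V c" by (force simp: Am_def)
  have "c' \<bullet> u \<le> c' \<bullet> v" if "u \<in> Am V c" for u
  proof -
    have "u \<in> V" "c \<bullet> v \<le> c \<bullet> u" using that H by (auto simp: Am_def)
    then show ?thesis using H by force
  qed
  then show "v \<in> Am (Am V c) c'" using v by (auto simp: Am_def)
qed

lemma eventually_pair:
  fixes D E :: real
  shows "eventually (\<lambda>t. (0 \<le> D + t * E) \<longleftrightarrow> (0 < D \<or> (D = 0 \<and> 0 \<le> E))) (at_right 0)"
proof (cases "D = 0")
  case True
  have "(0 \<le> D + t * E) \<longleftrightarrow> (0 < D \<or> (D = 0 \<and> 0 \<le> E))" if "0 < t" for t
    using that True by (simp add: zero_le_mult_iff)
  then show ?thesis unfolding eventually_at_right_field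
    by (intro exI[of _ 1]) simp
next
  case False
  define b where "b = \<bar>D\<bar> / (\<bar>E\<bar> + 1)"
  have b: "b > 0" using False by (simp add: b_def)
  have "0 \<le> D + t * E \<longleftrightarrow> (0 < D \<or> (D = 0 \<and> 0 \<le> E))" if "0 < t" "t < b" for t
  proof -
    have "t * \<bar>E\<bar> < \<bar>D\<bar>"
    proof -
      have "t * \<bar>E\<bar> \<le> t * (\<bar>E\<bar> + 1)" using that by simp
      also have "\<dots> < b * (\<bar>E\<bar> + 1)" using that by (intro mult_strict_right_mono) auto
      also have "\<dots> = \<bar>D\<bar>" by (simp add: b_def)
      finally show ?thesis .
    qed
    moreover have "\<bar>t * E\<bar> = t * \<bar>E\<bar>" using that by (simp add: abs_mult)
    moreover have "t * E \<le> \<bar>t * E\<bar>" "- \<bar>t * E\<bar> \<le> t * E"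
      using abs_ge_self[of "t*E"] abs_ge_minus_self[of "t*E"] by linarith+
    ultimately show ?thesis using False by (cases "D > 0") (simp_all add: abs_if split: if_split_asm)
  qed
  then show ?thesis unfolding eventually_at_right_field
    using b by blast
qed

lemma eventually_Am_perturb:
  fixes V :: "'a::euclidean_space set"
  assumes "finite V"
  shows "eventually (\<lambda>t. Am V (c + t *\<^sub>R c') = Am (Am V c) c') (at_right 0)"
proof -
  have "eventually (\<lambda>t. \<forall>p\<in>V\<times>V. (0 \<le> (c \<bullet> snd p - c \<bullet> fst p) + t * (c' \<bullet> snd p - c' \<bullet> fst p)) \<longleftrightarrow>
      (0 < (c \<bullet> snd p - c \<bullet> fst p) \<or> ((c \<bullet> snd p - c \<bullet> fst p) = 0 \<and> 0 \<le> (c' \<bullet> snd p - c' \<bullet> fst p)))) (at_right 0)"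
    using assms by (intro eventually_ball_finite ballI eventually_pair) auto
  then show ?thesis
  proof (rule eventually_mono)
    fix t assume H: "\<forall>p\<in>V\<times>V. (0 \<le> (c \<bullet> snd p - c \<bullet> fst p) + t * (c' \<bullet> snd p - c' \<bullet> fst p)) \<longleftrightarrow>
      (0 < (c \<bullet> snd p - c \<bullet> fst p) \<or> ((c \<bullet> snd p - c \<bullet> fst p) = 0 \<and> 0 \<le> (c' \<bullet> snd p - c' \<bullet> fst p)))"
    have "v \<in> Am V (c + t *\<^sub>R c') \<longleftrightarrow> v \<in> Am (Am V c) c'" for v
    proof -
      have "(c + t *\<^sub>R c') \<bullet> u \<le> (c + t *\<^sub>R c') \<bullet> v \<longleftrightarrow> (c \<bullet> u < c \<bullet> v \<or> (c \<bullet> u = c \<bullet> v \<and> c' \<bullet> u \<le> c' \<bullet> v))"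
        if "u \<in> V" "v \<in> V" for u
        using H[rule_format, of "(u,v)"] that by (auto simp: inner_add_left algebra_simps)
      then show ?thesis unfolding Am_lex by (auto simp: Am_def)
    qed
    then show "Am V (c + t *\<^sub>R c') = Am (Am V c) c'" by blast
  qed
qed

lemma eventually_Am_local:
  fixes V :: "'a::euclidean_space set"
  assumes "finite V"
  shows "eventually (\<lambda>c'. Am V c' \<subseteq> Am V c) (nhds c)"
proof -
  have "eventually (\<lambda>c'. \<forall>v\<in>V - Am V c. v \<notin> Am V c') (nhds c)"
  proof (intro eventually_ball_finite ballI)
    show "finite (V - Am V c)" using assms by simp
    fix v assume v: "v \<in> V - Am V c"
    then obtain u where u: "u \<in> V" "c \<bullet> u > c \<bullet> v" by (auto simp: Am_def not_le)
    have "((\<lambda>x. x \<bullet> u - x \<bullet> v) \<longlongrightarrow> c \<bullet> u - c \<bullet> v) (nhds c)"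
      by (intro tendsto_intros) (simp_all add: filterlim_ident)
    then have "eventually (\<lambda>x. x \<bullet> u - x \<bullet> v > 0) (nhds c)"
      using u by (intro order_tendstoD) auto
    then show "eventually (\<lambda>c'. v \<notin> Am V c') (nhds c)"
    proof (rule eventually_mono)
      fix x assume "x \<bullet> u - x \<bullet> v > 0"
      then show "v \<notin> Am V x" using u(1) unfolding Am_def by force
    qed
  qed
  then show ?thesis
    by (rule eventually_mono) (auto simp: Am_def)
qed



lemma compat_face:
  fixes V :: "'a::euclidean_space set"
  assumes "finite V" "compat V f"
  shows "compat (Am V c) f"
  unfolding compat_def
proof
  fix c'
  have "eventually (\<lambda>t. Am V (c + t *\<^sub>R c') = Am (Am V c) c' \<and>
          Am (f ` V) (c + t *\<^sub>R c') = Am (Am (f ` V) c) c') (at_right 0)"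
    using assms(1) by (intro eventually_conj eventually_Am_perturb) auto
  then obtain t where t: "Am V (c + t *\<^sub>R c') = Am (Am V c) c'"
     "Am (f ` V) (c + t *\<^sub>R c') = Am (Am (f ` V) c) c'"
    using eventually_happens[of _ "at_right (0::real)"] trivial_limit_at_right_real by blast
  have "Am (f ` Am V c) c' = Am (Am (f ` V) c) c'"
    using assms(2) by (simp add: compat_def)
  also have "\<dots> = Am (f ` V) (c + t *\<^sub>R c')" using t by simp
  also have "\<dots> = f ` Am V (c + t *\<^sub>R c')" using assms(2) by (simp add: compat_def)
  also have "\<dots> = f ` Am (Am V c) c'" using t by simp
  finally show "Am (f ` Am V c) c' = f ` Am (Am V c) c'" .
qed

lemma base_pair:
  fixes a b :: "'a::euclidean_space"
  assumes "a \<noteq> b" "compat {a,b} f" "f a \<noteq> f b"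
  shows "\<exists>l>0. f a - f b = l *\<^sub>R (a - b)"
proof -
  define e where "e = a - b"
  define d where "d = f a - f b"
  have ee: "e \<bullet> e > 0" using assms(1) by (simp add: e_def)
  have orth: "c \<bullet> d = 0" if "c \<bullet> e = 0" for c
  proof -
    have "c \<bullet> a = c \<bullet> b" using that by (simp add: e_def inner_diff_right)
    then have "Am {a,b} c = {a,b}" by (auto simp: Am_def)
    then have "Am {f a, f b} c = {f a, f b}" using assms(2) by (simp add: compat_def)
    then have "c \<bullet> f b \<le> c \<bullet> f a" "c \<bullet> f a \<le> c \<bullet> f b" unfolding Am_def by blast+
    then show ?thesis by (simp add: d_def inner_diff_right)
  qed
  define m where "m = (d \<bullet> e) / (e \<bullet> e)"
  define c0 where "c0 = d - m *\<^sub>R e"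
  have "c0 \<bullet> e = 0" using ee by (simp add: c0_def m_def inner_diff_left)
  then have "c0 \<bullet> d = 0" by (rule orth)
  then have "c0 \<bullet> c0 = 0" using \<open>c0 \<bullet> e = 0\<close>
    by (simp add: c0_def inner_diff_left inner_diff_right inner_commute)
  then have dm: "d = m *\<^sub>R e" by (simp add: c0_def)
  have "Am {a,b} e = {a}"
  proof -
    have "e \<bullet> a - e \<bullet> b = e \<bullet> e" by (simp add: e_def inner_diff_right)
    then have lt: "e \<bullet> b < e \<bullet> a" using ee by linarith
    then show ?thesis by (auto simp: Am_def)
  qed
  then have "Am {f a, f b} e = {f a}" using assms(2) by (simp add: compat_def)
  then have "f b \<notin> Am {f a, f b} e" using assms(3) by auto
  then have "e \<bullet> f b < e \<bullet> f a" unfolding Am_def by auto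
  then have "e \<bullet> d > 0" by (simp add: d_def inner_diff_right)
  then have "m * (e \<bullet> e) > 0" by (simp add: dm)
  then have "m > 0" using ee by (simp add: zero_less_mult_iff)
  then show ?thesis using dm by (auto simp: d_def e_def)
qed



lemma Am_cong:
  assumes "\<And>x y. x \<in> S \<Longrightarrow> y \<in> S \<Longrightarrow> c \<bullet> x - c \<bullet> y = c' \<bullet> x - c' \<bullet> y"
  shows "Am S c = Am S c'"
proof -
  have "c \<bullet> x \<le> c \<bullet> y \<longleftrightarrow> c' \<bullet> x \<le> c' \<bullet> y" if "x \<in> S" "y \<in> S" for x y
    using assms[OF that] by linarith
  then show ?thesis unfolding Am_def by blast
qed

lemma sphere_not_collinear:
  fixes a b d :: "'a::euclidean_space"
  assumes "a \<in> sphere 0 r" "b \<in> sphere 0 r" "d \<in> sphere 0 r" "a \<noteq> b" "a \<noteq> d" "b \<noteq> d"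
  shows "a - d \<notin> span {a - b}"
proof
  assume "a - d \<in> span {a - b}"
  then obtain k where k: "a - d = k *\<^sub>R (a - b)" by (auto simp: span_singleton)
  have na: "a \<bullet> a = r\<^sup>2" "b \<bullet> b = r\<^sup>2" "d \<bullet> d = r\<^sup>2" using assms(1-3)
    by (auto simp: dot_square_norm)
  define E where "E = (a - b) \<bullet> (a - b)"
  have E: "E > 0" using assms(4) by (simp add: E_def)
  have "E = 2 * r\<^sup>2 - 2 * (a \<bullet> b)" using na
    by (simp add: E_def inner_diff_left inner_diff_right inner_commute)
  then have ab: "a \<bullet> b = r\<^sup>2 - E / 2" by linarith
  have d: "d = a - k *\<^sub>R (a - b)" using k by (simp add: algebra_simps)
  have "d \<bullet> d = a \<bullet> a - 2 * k * (a \<bullet> a - a \<bullet> b) + k * k * E"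
    unfolding d E_def
    by (simp add: inner_diff_left inner_diff_right inner_commute algebra_simps)
  then have "k * k * E - k * E = 0" using na ab by (simp add: algebra_simps)
  then have "k * (k - 1) * E = 0" by (simp add: algebra_simps)
  then have "k = 0 \<or> k = 1" using E by simp
  then show False using d assms(5,6) by auto
qed

lemma glue:
  fixes S :: "'a::euclidean_space set" and f :: "'a \<Rightarrow> 'b"
  assumes fin: "finite S" and sph: "S \<subseteq> sphere 0 r" and card3: "3 \<le> card S"
    and loc: "\<And>c x y. Am S c \<noteq> S \<Longrightarrow> x \<in> Am S c \<Longrightarrow> y \<in> Am S c \<Longrightarrow> f x = f y"
    and uv: "u \<in> S" "v \<in> S"
  shows "f u = f v"
proof -
  define Gen where "Gen = {x - y | x y. x \<in> S \<and> y \<in> S}"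
  define M where "M = span Gen"
  obtain T where T: "T \<subseteq> S" "card T = 3" using obtain_subset_with_card_n[OF card3] by metis
  then obtain a b d where abd: "T = {a,b,d}" "a \<noteq> b" "b \<noteq> d" "a \<noteq> d"
    by (auto simp: card_3_iff)
  have inS: "a \<in> S" "b \<in> S" "d \<in> S" using T abd by auto
  have ind: "independent {a - d, a - b}"
  proof -
    have "a - b \<noteq> 0" using abd by simp
    then have "independent {a - b}" by (simp add: independent_insert)
    moreover have "a - d \<notin> span {a - b}"
      using sphere_not_collinear[of a r b d] inS sph abd by (auto simp: subset_iff)
    ultimately show ?thesis by (simp add: independent_insert)
  qed
  have cd2: "card {a - d, a - b} = 2" using abd by auto
  have "{a - d, a - b} \<subseteq> M" using inS unfolding M_def Gen_def
    by (auto intro!: span_base)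
  then have "2 \<le> dim M" using independent_card_le_dim[OF _ ind] cd2 by metis
  moreover have subM: "subspace M" by (simp add: M_def)
  ultimately have aff: "aff_dim M \<noteq> 1" by (simp add: aff_dim_subspace)
  have conn: "connected (M - {0})"
    by (rule connected_punctured_convex) (use subM aff in \<open>auto simp: subspace_imp_convex\<close>)
  have notall: "Am S c \<noteq> S" if "c \<in> M" "c \<noteq> 0" for c
  proof
    assume H: "Am S c = S"
    have "orthogonal c g" if "g \<in> Gen" for g
    proof -
      obtain x y where "g = x - y" "x \<in> S" "y \<in> S" using \<open>g \<in> Gen\<close> by (auto simp: Gen_def)
      then have "c \<bullet> x \<le> c \<bullet> y" "c \<bullet> y \<le> c \<bullet> x" using H unfolding Am_def by blast+
      then show ?thesis using \<open>g = x - y\<close> by (simp add: orthogonal_def inner_diff_right)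
    qed
    then have "orthogonal c c" using orthogonal_to_span[of c Gen c] \<open>c \<in> M\<close> by (simp add: M_def)
    then show False using \<open>c \<noteq> 0\<close> by (simp add: orthogonal_def)
  qed
  define k where "k c = f (SOME x. x \<in> Am S c)" for c
  have Sne: "S \<noteq> {}" using uv by auto
  have kloc: "\<forall>c\<in>M - {0}. eventually (\<lambda>c'. k c = k c') (at c within (M - {0}))"
  proof
    fix c assume c: "c \<in> M - {0}"
    have "eventually (\<lambda>c'. Am S c' \<subseteq> Am S c) (nhds c)" by (rule eventually_Am_local[OF fin])
    then have ev: "eventually (\<lambda>c'. Am S c' \<subseteq> Am S c) (at c within (M - {0}))"
      by (rule filter_leD[rotated]) (simp add: at_within_def)
    show "eventually (\<lambda>c'. k c = k c') (at c within (M - {0}))"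
    proof (rule eventually_mono[OF ev])
      fix c' assume sub: "Am S c' \<subseteq> Am S c"
      have "(SOME x. x \<in> Am S c') \<in> Am S c'"
        using Am_nonempty[OF fin Sne] by (simp add: some_in_eq)
      moreover have "(SOME x. x \<in> Am S c) \<in> Am S c"
        using Am_nonempty[OF fin Sne] by (simp add: some_in_eq)
      ultimately show "k c = k c'" unfolding k_def
        using loc[OF notall] c sub by blast
    qed
  qed
  have proj: "\<exists>y\<in>M - {0}. k y = f w" if w: "w \<in> S" for w
  proof -
    obtain y z where yz: "y \<in> span Gen" "\<And>x. x \<in> span Gen \<Longrightarrow> orthogonal z x" "w = y + z"
      using orthogonal_subspace_decomp_exists[of Gen w] by metis
    have "Am S y = Am S w"
    proof (rule Am_cong)
      fix x x' assume "x \<in> S" "x' \<in> S"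
      then have "x - x' \<in> span Gen" unfolding Gen_def by (auto intro!: span_base)
      then have "z \<bullet> (x - x') = 0" using yz(2) by (simp add: orthogonal_def)
      then show "y \<bullet> x - y \<bullet> x' = w \<bullet> x - w \<bullet> x'"
        using yz(3) by (simp add: inner_add_left inner_diff_right algebra_simps)
    qed
    also have "\<dots> = {w}" using Am_sphere_self[OF sph w] .
    finally have Ay: "Am S y = {w}" .
    have "y \<noteq> 0"
    proof
      assume "y = 0"
      then have "S = {w}" using Ay by (simp add: Am_zero)
      then show False using card3 by simp
    qed
    moreover have "k y = f w" using Ay by (simp add: k_def)
    ultimately show ?thesis using yz(1) by (auto simp: M_def)
  qed
  obtain yu where yu: "yu \<in> M - {0}" "k yu = f u" using proj[OF uv(1)] by blast
  obtain yv where yv: "yv \<in> M - {0}" "k yv = f v" using proj[OF uv(2)] by blast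
  have "k yu = k yv" by (rule connected_local_const[OF conn yu(1) yv(1) kloc])
  then show ?thesis using yu yv by simp
qed



lemma face_induct:
  fixes f :: "'a::euclidean_space \<Rightarrow> 'b" and Q :: "'a set \<Rightarrow> bool"
  assumes Qface: "\<And>S c. finite S \<Longrightarrow> S \<subseteq> sphere 0 r \<Longrightarrow> Q S \<Longrightarrow> Q (Am S c)"
    and base: "\<And>a b. a \<noteq> b \<Longrightarrow> a \<in> sphere 0 r \<Longrightarrow> b \<in> sphere 0 r \<Longrightarrow> Q {a,b} \<Longrightarrow> f a = f b"
  shows "finite S \<Longrightarrow> S \<subseteq> sphere 0 r \<Longrightarrow> Q S \<Longrightarrow> u \<in> S \<Longrightarrow> v \<in> S \<Longrightarrow> f u = f v"
proof (induction S arbitrary: u v rule: measure_induct_rule[where f=card])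
  case (less S)
  show ?case
  proof (cases "card S \<le> 2")
    case True
    show ?thesis
    proof (cases "u = v")
      case False
      have sub: "{u,v} \<subseteq> S" using less.prems by auto
      have "card {u,v} = 2" using False by simp
      then have "card {u,v} = card S" using True card_mono[OF less.prems(1) sub] by simp
      then have "{u,v} = S" using card_subset_eq[OF less.prems(1) sub] by simp
      then show ?thesis using base[OF False] less.prems by auto
    qed simp
  next
    case False
    show ?thesis
    proof (rule glue[OF less.prems(1,2) _ _ less.prems(4,5)])
      show "3 \<le> card S" using False by simp
      fix c x y assume H: "Am S c \<noteq> S" "x \<in> Am S c" "y \<in> Am S c"
      have ps: "Am S c \<subset> S" using H(1) Am_subset by blast
      show "f x = f y"
      proof (rule less.IH[OF psubset_card_mono[OF less.prems(1) ps]])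
        show "finite (Am S c)" using less.prems(1) Am_subset finite_subset by metis
        show "Am S c \<subseteq> sphere 0 r" using less.prems(2) Am_subset by blast
        show "Q (Am S c)" using Qface less.prems(1-3) by blast
      qed (use H in auto)
    qed
  qed
qed

lemma product_const:
  fixes V :: "'a::euclidean_space set"
  assumes "finite V" "V \<subseteq> sphere 0 r"
    and f: "compat V f" "inj_on f V" "f ` V \<subseteq> sphere 0 s"
    and g: "compat V g" "inj_on g V" "g ` V \<subseteq> sphere 0 t"
    and "u \<in> V" "v \<in> V"
  shows "f u \<bullet> g u = f v \<bullet> g v"
proof -
  define Q where "Q S \<longleftrightarrow> compat S f \<and> inj_on f S \<and> f ` S \<subseteq> sphere 0 s \<and>
    compat S g \<and> inj_on g S \<and> g ` S \<subseteq> sphere 0 t" for S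
  have Qf: "Q (Am S c)" if "finite S" "S \<subseteq> sphere 0 r" "Q S" for S c
    using that compat_face[of S f c] compat_face[of S g c] Am_subset[of S c] inj_on_subset[of f S "Am S c"]
      inj_on_subset[of g S "Am S c"] unfolding Q_def by blast
  have base: "f a \<bullet> g a = f b \<bullet> g b" if ab: "a \<noteq> b" and Q: "Q {a,b}" for a b
  proof -
    have Q': "compat {a,b} f" "inj_on f {a,b}" "f ` {a,b} \<subseteq> sphere 0 s"
      "compat {a,b} g" "inj_on g {a,b}" "g ` {a,b} \<subseteq> sphere 0 t" using Q unfolding Q_def by auto
    have "f a \<noteq> f b" "g a \<noteq> g b" using Q' ab by (auto simp: inj_on_def)
    then obtain l1 l2 where l: "l1 > 0" "f a - f b = l1 *\<^sub>R (a - b)" "l2 > 0" "g a - g b = l2 *\<^sub>R (a - b)"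
      using base_pair[OF ab Q'(1)] base_pair[OF ab Q'(4)] by meson
    define e where "e = a - b"
    define x where "x = f b"
    define y where "y = g b"
    have fa: "f a = x + l1 *\<^sub>R e" using l(2) by (simp add: x_def e_def algebra_simps)
    have ga: "g a = y + l2 *\<^sub>R e" using l(4) by (simp add: y_def e_def algebra_simps)
    have nf: "f a \<bullet> f a = x \<bullet> x" using Q'(3) by (simp add: x_def dot_square_norm)
    have ng: "g a \<bullet> g a = y \<bullet> y" using Q'(6) by (simp add: y_def dot_square_norm)
    have "2 * l1 * (x \<bullet> e) + l1 * l1 * (e \<bullet> e) = 0"
      using nf unfolding fa by (simp add: inner_add_left inner_add_right inner_commute algebra_simps)
    then have "l1 * (2 * (x \<bullet> e) + l1 * (e \<bullet> e)) = 0" by (simp add: algebra_simps)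
    then have "2 * (x \<bullet> e) + l1 * (e \<bullet> e) = 0" using l(1) by simp
    then have xe: "x \<bullet> e = - l1 * (e \<bullet> e) / 2" by linarith
    have "2 * l2 * (y \<bullet> e) + l2 * l2 * (e \<bullet> e) = 0"
      using ng unfolding ga by (simp add: inner_add_left inner_add_right inner_commute algebra_simps)
    then have "l2 * (2 * (y \<bullet> e) + l2 * (e \<bullet> e)) = 0" by (simp add: algebra_simps)
    then have "2 * (y \<bullet> e) + l2 * (e \<bullet> e) = 0" using l(3) by simp
    then have ye: "y \<bullet> e = - l2 * (e \<bullet> e) / 2" by linarith
    have "f a \<bullet> g a = x \<bullet> y + l2 * (x \<bullet> e) + l1 * (y \<bullet> e) + l1 * l2 * (e \<bullet> e)"
      unfolding fa ga by (simp add: inner_add_left inner_add_right inner_commute algebra_simps)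
    also have "\<dots> = x \<bullet> y" unfolding xe ye by (simp add: algebra_simps)
    finally show "f a \<bullet> g a = f b \<bullet> g b" by (simp add: x_def y_def)
  qed
  have QV: "Q V" using assms unfolding Q_def by auto
  show ?thesis
    using face_induct[of r Q "\<lambda>u. f u \<bullet> g u", OF Qf base assms(1,2) QV assms(9,10)] by blast
qed

lemma orth_fix_diff:
  fixes V :: "'a::euclidean_space set"
  assumes "finite V" "V \<subseteq> sphere 0 r" "orthogonal_transformation n" "compat V n"
    and "u \<in> V" "v \<in> V"
  shows "n u - u = n v - v"
proof -
  have Qf: "compat (Am S c) n" if "finite S" "S \<subseteq> sphere 0 r" "compat S n" for S c
    using compat_face that by blast
  have base: "n a - a = n b - b" if ab: "a \<noteq> b" and Q: "compat {a,b} n" for a b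
  proof -
    have "n a \<noteq> n b" using ab orthogonal_transformation_inj[OF assms(3)] by (auto simp: inj_def)
    then obtain l where l: "l > 0" "n a - n b = l *\<^sub>R (a - b)"
      using base_pair[OF ab Q] by blast
    have lin: "linear n" using assms(3) by (simp add: orthogonal_transformation_linear)
    have "n (a - b) = l *\<^sub>R (a - b)" using l(2) linear_diff[OF lin] by simp
    then have "norm (a - b) = l * norm (a - b)"
      using orthogonal_transformation_norm[OF assms(3), of "a - b"] l(1) by simp
    then have "l = 1" using ab by simp
    then show "n a - a = n b - b" using l(2) by (simp add: algebra_simps)
  qed
  show ?thesis
    using face_induct[of r "\<lambda>S. compat S n" "\<lambda>u. n u - u", OF Qf base assms(1,2,4,5,6)] by blast
qed



definition Mc :: "'a::euclidean_space set \<Rightarrow> 'a \<Rightarrow> 'a set" where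
  "Mc V c = {c'. Am V c \<subseteq> Am V c'}"

lemma Am_eq_val:
  assumes "x \<in> Am V c" "y \<in> Am V c"
  shows "c \<bullet> x = c \<bullet> y"
proof -
  have "c \<bullet> y \<le> c \<bullet> x" "c \<bullet> x \<le> c \<bullet> y" using assms unfolding Am_def by blast+
  then show ?thesis by linarith
qed

lemma hull_le_Am:
  fixes V :: "'a::euclidean_space set"
  assumes "v \<in> Am V c" "x \<in> convex hull V"
  shows "c \<bullet> x \<le> c \<bullet> v"
proof -
  have "V \<subseteq> {x. c \<bullet> x \<le> c \<bullet> v}" using assms(1) by (auto simp: Am_def)
  then have "convex hull V \<subseteq> {x. c \<bullet> x \<le> c \<bullet> v}"
    by (intro hull_minimal) (auto simp: convex_halfspace_le)
  then show ?thesis using assms(2) by auto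
qed

lemma face_c:
  fixes V :: "'a::euclidean_space set"
  assumes "finite V" "v \<in> Am V c"
  shows "convex hull V \<inter> {x. c \<bullet> x = c \<bullet> v} = convex hull (Am V c)"
proof
  let ?P = "convex hull V"
  let ?F = "?P \<inter> {x. c \<bullet> x = c \<bullet> v}"
  have "?F face_of ?P"
    by (rule face_of_Int_supporting_hyperplane_le) (use hull_le_Am[OF assms(2)] in auto)
  then obtain S' where S': "S' \<subseteq> V" "?F = convex hull S'"
    by (rule face_of_convex_hull_subset[OF finite_imp_compact[OF assms(1)]])
  have "S' \<subseteq> Am V c"
  proof
    fix s assume "s \<in> S'"
    then have "s \<in> ?F" using S'(2) hull_subset[of S' convex] by blast
    then have "c \<bullet> s = c \<bullet> v" "s \<in> V" using \<open>s \<in> S'\<close> S'(1) by blast+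
    then show "s \<in> Am V c" using assms(2) by (auto simp: Am_def)
  qed
  then show "?F \<subseteq> convex hull (Am V c)" unfolding S'(2) by (rule hull_mono)
next
  show "convex hull (Am V c) \<subseteq> convex hull V \<inter> {x. c \<bullet> x = c \<bullet> v}"
  proof (rule hull_minimal)
    show "Am V c \<subseteq> convex hull V \<inter> {x. c \<bullet> x = c \<bullet> v}"
      using assms(2) hull_subset[of V convex] Am_subset[of V c] Am_eq_val[of _ V c v] by blast
    show "convex (convex hull V \<inter> {x. c \<bullet> x = c \<bullet> v})"
      by (intro convex_Int convex_convex_hull convex_hyperplane)
  qed
qed

lemma hull_Am_eq:
  fixes V :: "'a::euclidean_space set"
  assumes "v' \<in> Am V c'" "Am V c \<subseteq> Am V c'" "x \<in> convex hull (Am V c)"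
  shows "c' \<bullet> x = c' \<bullet> v'"
proof -
  have "Am V c \<subseteq> {x. c' \<bullet> x = c' \<bullet> v'}"
    using assms(1,2) Am_eq_val[of _ V c' v'] by blast
  then have "convex hull (Am V c) \<subseteq> {x. c' \<bullet> x = c' \<bullet> v'}"
    by (intro hull_minimal) (auto simp: convex_hyperplane)
  then show ?thesis using assms(3) by auto
qed

lemma normal_cone_c:
  fixes V :: "'a::euclidean_space set"
  assumes "finite V" "V \<noteq> {}"
  shows "normal_cone (convex hull V) (convex hull (Am V c)) = Mc V c"
proof (intro set_eqI iffI)
  fix c' assume H: "c' \<in> normal_cone (convex hull V) (convex hull (Am V c))"
  have "Am V c \<subseteq> Am V c'"
  proof
    fix v assume v: "v \<in> Am V c"
    then have "v \<in> convex hull (Am V c)" by (simp add: hull_inc)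
    then have "\<forall>y\<in>convex hull V. c' \<bullet> y \<le> c' \<bullet> v" using H by (auto simp: normal_cone_def)
    then show "v \<in> Am V c'" using v hull_subset[of V convex] Am_subset[of V c] by (auto simp: Am_def)
  qed
  then show "c' \<in> Mc V c" by (simp add: Mc_def)
next
  fix c' assume H: "c' \<in> Mc V c"
  obtain v' where v': "v' \<in> Am V c'" using Am_nonempty[OF assms] by blast
  show "c' \<in> normal_cone (convex hull V) (convex hull (Am V c))"
    unfolding normal_cone_def
    using hull_Am_eq[OF v' H[unfolded Mc_def, simplified]] hull_le_Am[OF v'] by auto
qed

lemma NF_repr:
  fixes V :: "'a::euclidean_space set"
  assumes "finite V" "V \<noteq> {}"
  shows "normal_fan (convex hull V) = range (Mc V)"
proof (intro set_eqI iffI)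
  fix C assume "C \<in> normal_fan (convex hull V)"
  then obtain F where F: "C = normal_cone (convex hull V) F" "F face_of convex hull V" "F \<noteq> {}"
    by (auto simp: normal_fan_def)
  have "polyhedron (convex hull V)"
    by (simp add: assms(1) polytope_convex_hull polytope_imp_polyhedron)
  then have "F exposed_face_of convex hull V" using F(2) exposed_face_of_polyhedron by blast
  then obtain a b where ab: "convex hull V \<subseteq> {x. a \<bullet> x \<le> b}" "F = convex hull V \<inter> {x. a \<bullet> x = b}"
    by (auto simp: exposed_face_of_def)
  obtain v where v: "v \<in> Am V a" using Am_nonempty[OF assms] by blast
  have "b = a \<bullet> v"
  proof (rule order.antisym)
    obtain x where "x \<in> F" using F(3) by blast
    then show "b \<le> a \<bullet> v" using ab(2) hull_le_Am[OF v] by auto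
    show "a \<bullet> v \<le> b" using ab(1) v Am_subset hull_subset[of V convex] by blast
  qed
  then have "F = convex hull (Am V a)" using ab(2) face_c[OF assms(1) v] by simp
  then show "C \<in> range (Mc V)" using F(1) normal_cone_c[OF assms] by auto
next
  fix C assume "C \<in> range (Mc V)"
  then obtain c where C: "C = Mc V c" by auto
  obtain v where v: "v \<in> Am V c" using Am_nonempty[OF assms] by blast
  have "convex hull (Am V c) face_of convex hull V"
    unfolding face_c[OF assms(1) v, symmetric]
    by (rule face_of_Int_supporting_hyperplane_le) (use hull_le_Am[OF v] in auto)
  moreover have "convex hull (Am V c) \<noteq> {}" using v by auto
  moreover have "C = normal_cone (convex hull V) (convex hull (Am V c))"
    using normal_cone_c[OF assms] C by simp
  ultimately show "C \<in> normal_fan (convex hull V)"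
    unfolding normal_fan_def by blast
qed



lemma Mc_self: "c \<in> Mc V c" by (simp add: Mc_def)

lemma Mc_min: "c \<in> Mc V d \<Longrightarrow> Mc V c \<subseteq> Mc V d"
  by (auto simp: Mc_def)

lemma Mc_range_eq:
  assumes "range (Mc V) = range (Mc W)"
  shows "Mc V c = Mc W c"
proof
  have "Mc W c \<in> range (Mc V)" unfolding assms by simp
  then obtain d where d: "Mc W c = Mc V d" by auto
  show "Mc V c \<subseteq> Mc W c" using Mc_min[of c V d] Mc_self[of c W] d by simp
next
  have "Mc V c \<in> range (Mc W)" unfolding assms[symmetric] by simp
  then obtain d where d: "Mc V c = Mc W d" by auto
  show "Mc W c \<subseteq> Mc V c" using Mc_min[of c W d] Mc_self[of c V] d by simp
qed

lemma range_Mc_H: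
  assumes "range (Mc V) = range (Mc W)"
  shows "Am V c \<subseteq> Am V c' \<longleftrightarrow> Am W c \<subseteq> Am W c'"
  using Mc_range_eq[OF assms, of c] unfolding Mc_def by blast

lemma sing_lemma:
  fixes V W :: "'a::euclidean_space set"
  assumes fin: "finite V" "finite W" and ne: "W \<noteq> {}"
    and sph: "V \<subseteq> sphere 0 r" "W \<subseteq> sphere 0 s"
    and H: "\<And>c c'. Am V c \<subseteq> Am V c' \<longleftrightarrow> Am W c \<subseteq> Am W c'"
    and v: "v \<in> V"
  shows "\<exists>w. Am W v = {w}"
proof -
  obtain w1 where w1: "w1 \<in> Am W v" using Am_nonempty[OF fin(2) ne] by blast
  have "w = w1" if w: "w \<in> Am W v" for w
  proof -
    obtain t where t: "Am W (v + t *\<^sub>R w1) = Am (Am W v) w1"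
      using eventually_happens[OF eventually_Am_perturb[OF fin(2), of v w1]] trivial_limit_at_right_real
      by blast
    have "Am W v \<subseteq> sphere 0 s" using sph(2) Am_subset by blast
    then have t1: "Am W (v + t *\<^sub>R w1) = {w1}" using t Am_sphere_self w1 by metis
    then have "Am W (v + t *\<^sub>R w1) \<subseteq> Am W v" using w1 by simp
    then have "Am V (v + t *\<^sub>R w1) \<subseteq> Am V v" using H by blast
    also have "\<dots> = {v}" using Am_sphere_self[OF sph(1) v] .
    finally have "Am V (v + t *\<^sub>R w1) = {v}"
      using Am_nonempty[of V "v + t *\<^sub>R w1"] fin(1) v by blast
    then have "Am V v \<subseteq> Am V (v + t *\<^sub>R w1)" using Am_sphere_self[OF sph(1) v] by simp
    then have "Am W v \<subseteq> Am W (v + t *\<^sub>R w1)" using H by blast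
    then show ?thesis using w t1 by blast
  qed
  then show ?thesis using w1 by blast
qed

lemma H_to_compat:
  fixes V W :: "'a::euclidean_space set"
  assumes fin: "finite V" "finite W" and ne: "V \<noteq> {}" "W \<noteq> {}"
    and sph: "V \<subseteq> sphere 0 r" "W \<subseteq> sphere 0 s"
    and H: "\<And>c c'. Am V c \<subseteq> Am V c' \<longleftrightarrow> Am W c \<subseteq> Am W c'"
  defines "\<phi> \<equiv> \<lambda>v. THE w. Am W v = {w}"
  shows "compat V \<phi> \<and> inj_on \<phi> V \<and> \<phi> ` V = W"
proof -
  have phi: "Am W v = {\<phi> v}" if vV: "v \<in> V" for v
  proof -
    obtain w where "Am W v = {w}" using sing_lemma[OF fin ne(2) sph H vV] by blast
    then show ?thesis unfolding \<phi>_def by simp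
  qed
  have mem: "\<phi> v \<in> Am W c \<longleftrightarrow> v \<in> Am V c" if v: "v \<in> V" for v c
  proof -
    have "\<phi> v \<in> Am W c \<longleftrightarrow> Am W v \<subseteq> Am W c" using phi[OF v] by simp
    also have "\<dots> \<longleftrightarrow> Am V v \<subseteq> Am V c" using H by simp
    also have "\<dots> \<longleftrightarrow> v \<in> Am V c" using Am_sphere_self[OF sph(1) v] by simp
    finally show ?thesis .
  qed
  have phiW: "\<phi> v \<in> W" if "v \<in> V" for v using phi[OF that] Am_subset by blast
  have surj: "\<phi> ` V = W"
  proof
    show "\<phi> ` V \<subseteq> W" using phiW by blast
    show "W \<subseteq> \<phi> ` V"
    proof
      fix w assume w: "w \<in> W"
      have H': "\<And>c c'. Am W c \<subseteq> Am W c' \<longleftrightarrow> Am V c \<subseteq> Am V c'" using H by blast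
      obtain v where v: "Am V w = {v}" using sing_lemma[OF fin(2,1) ne(1) sph(2,1) H' w] by blast
      then have vV: "v \<in> V" using Am_subset by blast
      then have "\<phi> v \<in> Am W w" using mem[OF vV, of w] v by simp
      then have "\<phi> v = w" using Am_sphere_self[OF sph(2) w] by simp
      then show "w \<in> \<phi> ` V" using vV by blast
    qed
  qed
  have compat: "compat V \<phi>"
    unfolding compat_def
  proof
    fix c
    show "Am (\<phi> ` V) c = \<phi> ` Am V c"
    proof
      show "Am (\<phi> ` V) c \<subseteq> \<phi> ` Am V c"
      proof
        fix w assume "w \<in> Am (\<phi> ` V) c"
        then obtain v where "v \<in> V" "w = \<phi> v" "\<phi> v \<in> Am W c" using surj Am_subset by force
        then show "w \<in> \<phi> ` Am V c" using mem by blast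
      qed
      show "\<phi> ` Am V c \<subseteq> Am (\<phi> ` V) c"
        using mem surj Am_subset[of V c] by blast
    qed
  qed
  have inj: "inj_on \<phi> V"
  proof (rule inj_onI)
    fix u v assume uv: "u \<in> V" "v \<in> V" "\<phi> u = \<phi> v"
    have "\<phi> u \<in> Am W u" using phi[OF uv(1)] by simp
    then have "\<phi> v \<in> Am W u" using uv(3) by simp
    then have "v \<in> Am V u" using mem[OF uv(2)] by simp
    then show "u = v" using Am_sphere_self[OF sph(1) uv(1)] by simp
  qed
  show ?thesis using compat inj surj by blast
qed

lemma compat_Mc:
  assumes "compat V f" "inj_on f V"
  shows "Mc (f ` V) c = Mc V c"
proof -
  have "f ` Am V c \<subseteq> f ` Am V c' \<longleftrightarrow> Am V c \<subseteq> Am V c'" for c'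
    using inj_on_image_subset_iff[OF assms(2) Am_subset Am_subset] .
  then show ?thesis using assms(1) unfolding Mc_def compat_def by simp
qed

lemma Am_translate:
  "Am ((\<lambda>x. x + p) ` V) c = (\<lambda>x. x + p) ` Am V c"
  unfolding Am_def by (auto simp: inner_add_right)

lemma Am_orth:
  fixes g :: "'a::euclidean_space \<Rightarrow> 'a"
  assumes "orthogonal_transformation g"
  shows "Am (g ` V) c = g ` Am V (inv g c)"
proof -
  have c: "g (inv g c) = c" using orthogonal_transformation_surj[OF assms] by (simp add: surj_f_inv_f)
  have ip: "c \<bullet> g x = inv g c \<bullet> x" for x
    using assms c unfolding orthogonal_transformation_def by metis
  show ?thesis by (auto simp: Am_def ip)
qed



lemma sum_in_setsum:
  fixes A :: "'i \<Rightarrow> 'a::comm_monoid_add set"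
  assumes "finite I" "\<And>i. i \<in> I \<Longrightarrow> f i \<in> A i"
  shows "sum f I \<in> sum A I"
  using assms
proof (induction I rule: finite_induct)
  case empty
  then show ?case by (simp add: set_zero)
next
  case (insert x F)
  then show ?case by (auto intro!: set_plus_intro)
qed

lemma setsum_le:
  fixes A :: "'i \<Rightarrow> 'a::euclidean_space set"
  assumes "finite I" "\<And>i y. i \<in> I \<Longrightarrow> y \<in> A i \<Longrightarrow> c \<bullet> y \<le> b i" "x \<in> sum A I"
  shows "c \<bullet> x \<le> sum b I"
  using assms
proof (induction I arbitrary: x rule: finite_induct)
  case empty
  then show ?case by (simp add: set_zero)
next
  case (insert i F)
  then have "x \<in> A i + sum A F" by simp
  then obtain a y where "x = a + y" "a \<in> A i" "y \<in> sum A F" by (auto elim: set_plus_elim)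
  moreover have "c \<bullet> a \<le> b i" using insert.prems(1) \<open>a \<in> A i\<close> by blast
  moreover have "c \<bullet> y \<le> sum b F" using insert.IH[of y] insert.prems(1) \<open>y \<in> sum A F\<close> by blast
  ultimately show ?case using insert.hyps by (simp add: inner_add_right)
qed

lemma linear_image_setsum:
  fixes A :: "'i \<Rightarrow> 'a::real_vector set" and g :: "'a \<Rightarrow> 'b::real_vector"
  assumes "linear g" "finite I"
  shows "g ` sum A I = (\<Sum>i\<in>I. g ` A i)"
  using assms(2)
proof (induction I rule: finite_induct)
  case empty
  then show ?case using linear_0[OF assms(1)] by (simp add: set_zero)
next
  case (insert x F)
  have "g ` (A x + sum A F) = g ` A x + g ` sum A F"
    unfolding set_plus_image image_image
    by (force simp: linear_add[OF assms(1)] split_def image_iff)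
  then show ?case using insert by simp
qed

lemma sum_real:
  fixes V :: "'a::euclidean_space set" and Os :: "'a set set" and \<phi> :: "'a set \<Rightarrow> 'a \<Rightarrow> 'a"
  assumes fin: "finite V" "V \<noteq> {}" "finite Os" "Os \<noteq> {}" and sph: "V \<subseteq> sphere 0 r"
    and H: "\<And>U. U \<in> Os \<Longrightarrow> compat V (\<phi> U) \<and> inj_on (\<phi> U) V \<and> \<phi> U ` V = U"
  defines "\<psi> \<equiv> \<lambda>v. \<Sum>U\<in>Os. \<phi> U v"
  shows "compat V \<psi>" "inj_on \<psi> V" "convex hull (\<Sum>U\<in>Os. U) = convex hull (\<psi> ` V)"
proof -
  have memU: "\<phi> U v \<in> Am U c \<longleftrightarrow> v \<in> Am V c" if "U \<in> Os" "v \<in> V" for U v c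
  proof -
    have "Am U c = \<phi> U ` Am V c" using H[OF that(1)] unfolding compat_def by metis
    then show ?thesis using H[OF that(1)] that(2) Am_subset[of V c] by (auto simp: inj_on_def)
  qed
  have inU: "\<phi> U v \<in> U" if "U \<in> Os" "v \<in> V" for U v using H[OF that(1)] that(2) by blast
  have key: "\<psi> v \<in> Am (\<psi> ` V) c \<longleftrightarrow> v \<in> Am V c" if v: "v \<in> V" for v c
  proof -
    obtain v0 where v0: "v0 \<in> Am V c" using Am_nonempty[OF fin(1,2)] by blast
    have v0V: "v0 \<in> V" using v0 Am_subset by blast
    have le: "c \<bullet> \<phi> U u \<le> c \<bullet> \<phi> U v0" if "U \<in> Os" "u \<in> V" for U u
      using memU[OF that(1) v0V] v0 inU[OF that] by (auto simp: Am_def)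
    have lesum: "c \<bullet> \<psi> u \<le> c \<bullet> \<psi> v0" if "u \<in> V" for u
      unfolding \<psi>_def inner_sum_right using le that by (intro sum_mono) auto
    show ?thesis
    proof
      assume "\<psi> v \<in> Am (\<psi> ` V) c"
      then have ge: "c \<bullet> \<psi> v0 \<le> c \<bullet> \<psi> v" using v0V by (auto simp: Am_def)
      obtain U where U: "U \<in> Os" using fin(4) by blast
      have "c \<bullet> \<phi> U v = c \<bullet> \<phi> U v0"
      proof (rule ccontr)
        assume "c \<bullet> \<phi> U v \<noteq> c \<bullet> \<phi> U v0"
        then have "c \<bullet> \<phi> U v < c \<bullet> \<phi> U v0" using le[OF U v] by simp
        then have "(\<Sum>U\<in>Os. c \<bullet> \<phi> U v) < (\<Sum>U\<in>Os. c \<bullet> \<phi> U v0)"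
          using le v U by (intro sum_strict_mono_ex1[OF fin(3)]) auto
        then show False using ge unfolding \<psi>_def inner_sum_right by simp
      qed
      then have "\<phi> U v \<in> Am U c"
        using memU[OF U v0V] v0 inU[OF U v] H[OF U] by (auto simp: Am_def)
      then show "v \<in> Am V c" using memU[OF U v] by simp
    next
      assume vA: "v \<in> Am V c"
      have "c \<bullet> \<phi> U v = c \<bullet> \<phi> U v0" if "U \<in> Os" for U
        using memU[OF that v] memU[OF that v0V] vA v0 Am_eq_val by blast
      then have "c \<bullet> \<psi> v = c \<bullet> \<psi> v0" unfolding \<psi>_def inner_sum_right by simp
      then show "\<psi> v \<in> Am (\<psi> ` V) c" using lesum v by (auto simp: Am_def)
    qed
  qed
  show compat: "compat V \<psi>"
    unfolding compat_def
  proof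
    fix c
    show "Am (\<psi> ` V) c = \<psi> ` Am V c"
    proof
      show "Am (\<psi> ` V) c \<subseteq> \<psi> ` Am V c"
      proof
        fix w assume w: "w \<in> Am (\<psi> ` V) c"
        then obtain v where "v \<in> V" "w = \<psi> v" using Am_subset by blast
        then show "w \<in> \<psi> ` Am V c" using key w by blast
      qed
      show "\<psi> ` Am V c \<subseteq> Am (\<psi> ` V) c" using key Am_subset[of V c] by blast
    qed
  qed
  show "inj_on \<psi> V"
  proof (rule inj_onI)
    fix u v assume uv: "u \<in> V" "v \<in> V" "\<psi> u = \<psi> v"
    have "\<psi> u \<in> Am (\<psi> ` V) u" using key[OF uv(1)] Am_sphere_self[OF sph uv(1)] by simp
    then have "v \<in> Am V u" using key[OF uv(2)] uv(3) by simp
    then show "u = v" using Am_sphere_self[OF sph uv(1)] by simp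
  qed
  show "convex hull (\<Sum>U\<in>Os. U) = convex hull (\<psi> ` V)"
  proof (rule order.antisym)
    have sub: "\<psi> ` V \<subseteq> (\<Sum>U\<in>Os. U)"
      unfolding \<psi>_def using inU by (auto intro!: sum_in_setsum[OF fin(3)])
    then show "convex hull (\<psi> ` V) \<subseteq> convex hull (\<Sum>U\<in>Os. U)" by (rule hull_mono)
    have "(\<Sum>U\<in>Os. U) \<subseteq> convex hull (\<psi> ` V)"
    proof
      fix x assume x: "x \<in> (\<Sum>U\<in>Os. U)"
      show "x \<in> convex hull (\<psi> ` V)"
      proof (rule ccontr)
        assume nx: "x \<notin> convex hull (\<psi> ` V)"
        have "closed (convex hull (\<psi> ` V))"
          using fin(1) by (simp add: compact_imp_closed finite_imp_compact_convex_hull)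
        then obtain a b where ab: "a \<bullet> x < b" "\<forall>y\<in>convex hull (\<psi> ` V). a \<bullet> y > b"
          using separating_hyperplane_closed_point[OF convex_convex_hull _ nx] by blast
        define c where "c = - a"
        obtain v0 where v0: "v0 \<in> Am V c" using Am_nonempty[OF fin(1,2)] by blast
        have v0V: "v0 \<in> V" using v0 Am_subset by blast
        have "c \<bullet> x \<le> (\<Sum>U\<in>Os. c \<bullet> \<phi> U v0)"
        proof (rule setsum_le[OF fin(3) _ x])
          fix U y assume "U \<in> Os" "y \<in> U"
          then obtain u where "u \<in> V" "y = \<phi> U u" using H by blast
          then show "c \<bullet> y \<le> c \<bullet> \<phi> U v0"
            using memU[OF \<open>U \<in> Os\<close> v0V] v0 inU[OF \<open>U \<in> Os\<close>] by (auto simp: Am_def)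
        qed
        also have "\<dots> = c \<bullet> \<psi> v0" unfolding \<psi>_def inner_sum_right ..
        finally have "c \<bullet> x \<le> c \<bullet> \<psi> v0" .
        moreover have "a \<bullet> \<psi> v0 > b" using ab(2) v0V hull_subset[of "\<psi> ` V" convex] by blast
        ultimately show False using ab(1) by (simp add: c_def)
      qed
    qed
    then show "convex hull (\<Sum>U\<in>Os. U) \<subseteq> convex hull (\<psi> ` V)"
      by (simp add: hull_minimal)
  qed
qed



lemma center_exists:
  fixes V0 :: "'a::euclidean_space set"
  assumes "v0 \<in> V0" "V0 \<subseteq> sphere z r"
  shows "\<exists>p \<rho>. (\<lambda>x. x + - p) ` V0 \<subseteq> sphere 0 \<rho> \<and>
     (\<lambda>x. x + - p) ` V0 \<subseteq> span {x - y | x y. x \<in> (\<lambda>x. x + - p) ` V0 \<and> y \<in> (\<lambda>x. x + - p) ` V0}"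
proof -
  define Gen0 where "Gen0 = {x - y | x y. x \<in> V0 \<and> y \<in> V0}"
  obtain y w where yw: "y \<in> span Gen0" "\<And>x. x \<in> span Gen0 \<Longrightarrow> orthogonal w x" "z - v0 = y + w"
    using orthogonal_subspace_decomp_exists[of Gen0 "z - v0"] by metis
  define p where "p = v0 + y"
  have vp: "v - p \<in> span Gen0" if "v \<in> V0" for v
  proof -
    have "v - v0 \<in> span Gen0" using that assms(1) unfolding Gen0_def by (auto intro!: span_base)
    then have "(v - v0) - y \<in> span Gen0" using yw(1) by (rule span_diff)
    then show ?thesis by (simp add: p_def algebra_simps)
  qed
  have sq: "(v - p) \<bullet> (v - p) = r\<^sup>2 - w \<bullet> w" if v: "v \<in> V0" for v
  proof -
    define a where "a = v - p"
    have "z = p + w" using yw(3) by (simp add: p_def algebra_simps)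
    then have vz: "v - z = a - w" by (simp add: a_def)
    have aw: "a \<bullet> w = 0" using yw(2)[OF vp[OF v]] by (simp add: orthogonal_def inner_commute a_def)
    have "(v - z) \<bullet> (v - z) = r\<^sup>2" using assms(2) v
      by (auto simp: dot_square_norm dist_norm norm_minus_commute subset_iff)
    moreover have "(a - w) \<bullet> (a - w) = a \<bullet> a - 2 * (a \<bullet> w) + w \<bullet> w"
      by (simp add: inner_diff_left inner_diff_right inner_commute)
    ultimately have "a \<bullet> a = r\<^sup>2 - w \<bullet> w" using vz aw by simp
    then show ?thesis by (simp add: a_def)
  qed
  define \<rho> where "\<rho> = norm (v0 - p)"
  have "(\<lambda>x. x + - p) ` V0 \<subseteq> sphere 0 \<rho>"
  proof
    fix x assume "x \<in> (\<lambda>x. x + - p) ` V0"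
    then obtain v where v: "v \<in> V0" "x = v - p" by auto
    have "norm (v - p) = norm (v0 - p)"
      using sq[OF v(1)] sq[OF assms(1)] by (simp add: norm_eq_sqrt_inner)
    then show "x \<in> sphere 0 \<rho>" using v by (simp add: \<rho>_def)
  qed
  moreover have "(\<lambda>x. x + - p) ` V0 \<subseteq> span {x - y | x y. x \<in> (\<lambda>x. x + - p) ` V0 \<and> y \<in> (\<lambda>x. x + - p) ` V0}"
  proof -
    have "Gen0 \<subseteq> {x - y | x y. x \<in> (\<lambda>x. x + - p) ` V0 \<and> y \<in> (\<lambda>x. x + - p) ` V0}"
    proof
      fix g assume "g \<in> Gen0"
      then obtain a b where "g = a - b" "a \<in> V0" "b \<in> V0" by (auto simp: Gen0_def)
      moreover have "a - p \<in> (\<lambda>x. x + - p) ` V0" "b - p \<in> (\<lambda>x. x + - p) ` V0"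
        using \<open>a \<in> V0\<close> \<open>b \<in> V0\<close> by force+
      moreover have "g = (a - p) - (b - p)" using \<open>g = a - b\<close> by simp
      ultimately show "g \<in> {x - y | x y. x \<in> (\<lambda>x. x + - p) ` V0 \<and> y \<in> (\<lambda>x. x + - p) ` V0}"
        by blast
    qed
    then have "span Gen0 \<subseteq> span {x - y | x y. x \<in> (\<lambda>x. x + - p) ` V0 \<and> y \<in> (\<lambda>x. x + - p) ` V0}"
      by (rule span_mono)
    then show ?thesis using vp by auto
  qed
  ultimately show ?thesis by blast
qed

lemma kernel_fix:
  fixes V :: "'a::euclidean_space set"
  assumes fin: "finite V" and sph: "V \<subseteq> sphere 0 \<rho>"
    and spn: "V \<subseteq> span {x - y | x y. x \<in> V \<and> y \<in> V}"
    and FM: "range (Mc V) = F"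
    and on: "orthogonal_transformation n" and nC: "\<And>C. C \<in> F \<Longrightarrow> n ` C = C"
    and v: "v \<in> V"
  shows "n v = v"
proof -
  have injn: "inj n" using on by (rule orthogonal_transformation_inj)
  have surjn: "surj n" using on by (rule orthogonal_transformation_surj)
  have invC: "inv n ` C = C" if "C \<in> F" for C
    using image_inv_f_f[OF injn, of C] nC[OF that] by simp
  have McF: "Mc V c \<in> F" for c using FM by auto
  have AmN: "Am V (n c) = Am V c" for c
  proof
    have "n c \<in> n ` Mc V c" using Mc_self[of c V] by blast
    then have "n c \<in> Mc V c" using nC[OF McF] by simp
    then show "Am V c \<subseteq> Am V (n c)" by (simp add: Mc_def)
    have "inv n (n c) \<in> inv n ` Mc V (n c)" using Mc_self[of "n c" V] by blast
    then have "c \<in> Mc V (n c)" using invC[OF McF] inv_f_f[OF injn] by simp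
    then show "Am V (n c) \<subseteq> Am V c" by (simp add: Mc_def)
  qed
  have compat: "compat V n"
    unfolding compat_def
  proof
    fix c
    have "Am (n ` V) c = n ` Am V (inv n c)" by (rule Am_orth[OF on])
    also have "Am V (inv n c) = Am V c"
      using AmN[of "inv n c"] surj_f_inv_f[OF surjn] by simp
    finally show "Am (n ` V) c = n ` Am V c" .
  qed
  have diff: "n u - u = n w - w" if "u \<in> V" "w \<in> V" for u w
    using orth_fix_diff[OF fin sph on compat that] .
  have lin: "linear (\<lambda>x. n x - x)"
    using on by (intro linear_compose_sub linear_ident) (simp add: orthogonal_transformation_linear)
  have "n x - x = 0" if "x \<in> span {x - y | x y. x \<in> V \<and> y \<in> V}" for x
  proof (rule linear_eq_0_on_span[OF lin _ that])
    fix g assume "g \<in> {x - y | x y. x \<in> V \<and> y \<in> V}"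
    then obtain a b where ab: "g = a - b" "a \<in> V" "b \<in> V" by blast
    have "n (a - b) = n a - n b" using linear_diff[OF orthogonal_transformation_linear[OF on]] by simp
    then have "n (a - b) - (a - b) = (n a - a) - (n b - b)" by (simp add: algebra_simps)
    also have "\<dots> = 0" using diff[OF ab(2,3)] by simp
    finally show "n g - g = 0" using ab(1) by simp
  qed
  then show ?thesis using spn v by auto
qed



lemma Mc_orth:
  fixes g :: "'a::euclidean_space \<Rightarrow> 'a"
  assumes og: "orthogonal_transformation g"
  shows "Mc (g ` V) c = g ` Mc V (inv g c)"
proof -
  have inj: "inj g" and surj: "surj g" using og orthogonal_transformation_inj orthogonal_transformation_surj by auto
  have mem: "x \<in> g ` S \<longleftrightarrow> inv g x \<in> S" for x S
  proof
    assume "x \<in> g ` S" then show "inv g x \<in> S" using inv_f_f[OF inj] by auto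
  next
    assume "inv g x \<in> S" then show "x \<in> g ` S" using surj_f_inv_f[OF surj, of x] by (metis imageI)
  qed
  show ?thesis
  proof (intro set_eqI)
    fix c'
    have "c' \<in> Mc (g ` V) c \<longleftrightarrow> g ` Am V (inv g c) \<subseteq> g ` Am V (inv g c')"
      by (simp add: Mc_def Am_orth[OF og])
    also have "\<dots> \<longleftrightarrow> Am V (inv g c) \<subseteq> Am V (inv g c')" by (rule inj_image_subset_iff[OF inj])
    also have "\<dots> \<longleftrightarrow> c' \<in> g ` Mc V (inv g c)" by (simp add: mem Mc_def)
    finally show "c' \<in> Mc (g ` V) c \<longleftrightarrow> c' \<in> g ` Mc V (inv g c)" .
  qed
qed

lemma Mc_orth_range:
  fixes g :: "'a::euclidean_space \<Rightarrow> 'a"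
  assumes og: "orthogonal_transformation g"
  shows "range (Mc (g ` V)) = (\<lambda>C. g ` C) ` range (Mc V)"
proof -
  have "bij (inv g)" using og orthogonal_transformation_bij bij_imp_bij_inv by blast
  then have r: "range (inv g) = UNIV" by (simp add: bij_def surj_def)
  have "range (Mc (g ` V)) = (\<lambda>C. g ` C) ` Mc V ` range (inv g)"
    by (auto simp: Mc_orth[OF og] image_image)
  then show ?thesis using r by simp
qed

theorem corollary2p9:
  fixes G :: "('a::euclidean_space \<Rightarrow> 'a) set" and \<F> :: "'a set set"
  assumes "orthogonal_subgroup G"
    and "is_fan \<F>"
    and "\<forall>g\<in>G. \<F> = {g ` C | C. C \<in> \<F>}"
    and "inscribable \<F>"
  shows "\<exists>P. inscribed P \<and> normal_fan P = \<F> \<and> (\<forall>g\<in>G. g ` P = P)"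
proof -
  have og: "orthogonal_transformation g" if "g \<in> G" for g
    using assms(1) that by (simp add: orthogonal_subgroup_def)
  have idG: "id \<in> G" and compG: "\<And>g h. g \<in> G \<Longrightarrow> h \<in> G \<Longrightarrow> g \<circ> h \<in> G"
    and invG: "\<And>g. g \<in> G \<Longrightarrow> inv g \<in> G"
    using assms(1) by (auto simp: orthogonal_subgroup_def)
  have finF: "finite \<F>" using assms(2) by (simp add: is_fan_def)
  have imgF: "(\<lambda>C. g ` C) ` \<F> = \<F>" if "g \<in> G" for g
    using assms(3) that by (simp add: Setcompr_eq_image)
  obtain P where P: "inscribed P" "normal_fan P = \<F>"
    using assms(4) by (auto simp: inscribable_def)
  show ?thesis
  proof (cases "P = {}")
    case True
    then show ?thesis using P by auto
  next
    case False
    have poly: "polytope P" using P(1) by (simp add: inscribed_def)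
    obtain z r where zr: "\<And>v. v extreme_point_of P \<Longrightarrow> v \<in> sphere z r"
      using P(1) by (auto simp: inscribed_def)
    define V0 where "V0 = {x. x extreme_point_of P}"
    obtain X where X: "finite X" "P = convex hull X" using poly by (auto simp: polytope_def)
    have "V0 \<subseteq> X" using X(2) extreme_point_of_convex_hull by (auto simp: V0_def)
    then have finV0: "finite V0" using X(1) finite_subset by blast
    have PV0: "P = convex hull V0"
      unfolding V0_def by (rule Krein_Milman_Minkowski[OF polytope_imp_compact[OF poly] polytope_imp_convex[OF poly]])
    have neV0: "V0 \<noteq> {}" using PV0 False by auto
    then obtain v0 where v0: "v0 \<in> V0" by blast
    have sphV0: "V0 \<subseteq> sphere z r" using zr by (auto simp: V0_def)
    obtain p \<rho> where p: "(\<lambda>x. x + - p) ` V0 \<subseteq> sphere 0 \<rho>"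
      "(\<lambda>x. x + - p) ` V0 \<subseteq> span {x - y | x y. x \<in> (\<lambda>x. x + - p) ` V0 \<and> y \<in> (\<lambda>x. x + - p) ` V0}"
      using center_exists[OF v0 sphV0] by blast
    define V where "V = (\<lambda>x. x + - p) ` V0"
    have finV: "finite V" and neV: "V \<noteq> {}" and sphV: "V \<subseteq> sphere 0 \<rho>"
      and spnV: "V \<subseteq> span {x - y | x y. x \<in> V \<and> y \<in> V}"
      using finV0 neV0 p by (auto simp: V_def)
    have "\<forall>c. Am ((\<lambda>x. x + - p) ` V0) c = (\<lambda>x. x + - p) ` Am V0 c"
      by (rule allI, rule Am_translate)
    then have "compat V0 (\<lambda>x. x + - p)" unfolding compat_def .
    then have "Mc V c = Mc V0 c" for c unfolding V_def by (rule compat_Mc) (simp add: inj_on_def)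
    then have FM: "range (Mc V) = \<F>"
      using NF_repr[OF finV0 neV0] P(2) PV0 by (metis ext)
    define \<phi> where "\<phi> U = (\<lambda>v. THE w. Am U v = {w})" for U :: "'a set"
    define Os where "Os = (\<lambda>g. g ` V) ` G"
    have rangeG: "range (Mc (g ` V)) = \<F>" if "g \<in> G" for g
      using Mc_orth_range[OF og[OF that], of V] FM imgF[OF that] by simp
    have sphG: "g ` V \<subseteq> sphere 0 \<rho>" if "g \<in> G" for g
      using sphV orthogonal_transformation_norm[OF og[OF that]] by auto
    have HOs: "compat V (\<phi> U) \<and> inj_on (\<phi> U) V \<and> \<phi> U ` V = U" if UO: "U \<in> Os" for U
    proof -
      obtain g where g: "g \<in> G" "U = g ` V" using UO by (auto simp: Os_def)
      have H: "Am V c \<subseteq> Am V c' \<longleftrightarrow> Am U c \<subseteq> Am U c'" for c c'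
        using range_Mc_H[of V U c c'] FM rangeG[OF g(1)] g(2) by simp
      show ?thesis unfolding \<phi>_def
        using H_to_compat[OF finV _ neV _ sphV _ H] g sphG[OF g(1)] finV neV by auto
    qed
    have sphOs: "U \<subseteq> sphere 0 \<rho>" if "U \<in> Os" for U using that sphG by (auto simp: Os_def)
    define \<sigma> where "\<sigma> g = restrict (\<lambda>C. g ` C) \<F>" for g :: "'a \<Rightarrow> 'a"
    have fixV: "g ` V = h ` V" if gh: "g \<in> G" "h \<in> G" "\<sigma> g = \<sigma> h" for g h
    proof -
      define n where "n = inv h \<circ> g"
      have nG: "n \<in> G" using compG[OF invG[OF gh(2)] gh(1)] by (simp add: n_def)
      have injh: "inj h" and surjh: "surj h"
        using og[OF gh(2)] orthogonal_transformation_inj orthogonal_transformation_surj by auto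
      have nC: "n ` C = C" if C: "C \<in> \<F>" for C
      proof -
        have "g ` C = h ` C" using fun_cong[OF gh(3), of C] C by (simp add: \<sigma>_def)
        then have "inv h ` g ` C = C" using image_inv_f_f[OF injh, of C] by simp
        then show ?thesis by (simp add: n_def image_comp)
      qed
      have "n v = v" if "v \<in> V" for v
        by (rule kernel_fix[OF finV sphV spnV FM og[OF nG] nC that])
      then have "g v = h v" if "v \<in> V" for v
        using that surj_f_inv_f[OF surjh, of "g v"] by (metis comp_apply n_def)
      then show ?thesis by (rule image_cong[OF refl])
    qed
    have finOs: "finite Os"
    proof -
      define \<Theta> where "\<Theta> s = (SOME g. g \<in> G \<and> \<sigma> g = s) ` V" for s
      have "Os \<subseteq> \<Theta> ` (\<sigma> ` G)"
      proof
        fix U assume "U \<in> Os"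
        then obtain g where g: "g \<in> G" "U = g ` V" by (auto simp: Os_def)
        define g' where "g' = (SOME g'. g' \<in> G \<and> \<sigma> g' = \<sigma> g)"
        have "g' \<in> G \<and> \<sigma> g' = \<sigma> g" unfolding g'_def by (rule someI[of _ g]) (use g in simp)
        then have "g' ` V = g ` V" using fixV g(1) by blast
        then have "U = \<Theta> (\<sigma> g)" using g(2) by (simp add: \<Theta>_def g'_def)
        then show "U \<in> \<Theta> ` (\<sigma> ` G)" using g(1) by blast
      qed
      moreover have "\<sigma> ` G \<subseteq> Pi\<^sub>E \<F> (\<lambda>_. \<F>)"
      proof
        fix s assume "s \<in> \<sigma> ` G"
        then obtain g where g: "g \<in> G" "s = \<sigma> g" by blast
        have "g ` C \<in> \<F>" if "C \<in> \<F>" for C using imgF[OF g(1)] that by blast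
        then show "s \<in> Pi\<^sub>E \<F> (\<lambda>_. \<F>)" using g(2) by (auto simp: \<sigma>_def)
      qed
      then have "finite (\<sigma> ` G)" using finite_PiE[OF finF, of "\<lambda>_. \<F>"] finF finite_subset by blast
      ultimately show ?thesis using finite_subset by blast
    qed
    have "id ` V \<in> Os" unfolding Os_def using idG by (rule imageI)
    then have VOs: "V \<in> Os" by simp
    then have neOs: "Os \<noteq> {}" by blast
    define \<psi> where "\<psi> = (\<lambda>v. \<Sum>U\<in>Os. \<phi> U v)"
    note SR = sum_real[OF finV neV finOs neOs sphV HOs]
    have cpsi: "compat V \<psi>" using SR(1) unfolding \<psi>_def .
    have ipsi: "inj_on \<psi> V" using SR(2) unfolding \<psi>_def .
    have hull_eq: "convex hull (\<Sum>U\<in>Os. U) = convex hull (\<psi> ` V)" using SR(3) unfolding \<psi>_def .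
    have normpsi: "norm (\<psi> v) = norm (\<psi> v0')" if "v \<in> V" "v0' \<in> V" for v v0'
    proof -
      have trm: "\<phi> U v \<bullet> \<phi> U' v = \<phi> U v0' \<bullet> \<phi> U' v0'" if "U \<in> Os" "U' \<in> Os" for U U'
        using product_const[OF finV sphV _ _ _ _ _ _ \<open>v \<in> V\<close> \<open>v0' \<in> V\<close>, of "\<phi> U" \<rho> "\<phi> U'" \<rho>]
          HOs[OF that(1)] HOs[OF that(2)] sphOs[OF that(1)] sphOs[OF that(2)] by auto
      have "\<psi> v \<bullet> \<psi> v = \<psi> v0' \<bullet> \<psi> v0'"
        unfolding \<psi>_def inner_sum_left inner_sum_right using trm by simp
      then show ?thesis by (simp add: norm_eq_sqrt_inner)
    qed
    obtain w0 where w0: "w0 \<in> V" using neV by blast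
    define Q where "Q = convex hull (\<Sum>U\<in>Os. U)"
    have finpsi: "finite (\<psi> ` V)" using finV by simp
    have nepsi: "\<psi> ` V \<noteq> {}" using neV by simp
    have insc: "inscribed Q"
      unfolding inscribed_def
    proof
      show "polytope Q" unfolding Q_def hull_eq by (rule polytope_convex_hull[OF finpsi])
      have "v \<in> sphere 0 (norm (\<psi> w0))" if "v extreme_point_of Q" for v
      proof -
        have "v extreme_point_of convex hull (\<psi> ` V)" using that unfolding Q_def hull_eq .
        then have "v \<in> \<psi> ` V" by (rule extreme_point_of_convex_hull)
        then obtain u where u: "u \<in> V" "v = \<psi> u" by blast
        have "norm (\<psi> u) = norm (\<psi> w0)" by (rule normpsi[OF u(1) w0])
        then show ?thesis using u(2) by simp
      qed
      then show "\<exists>z r. \<forall>v. v extreme_point_of Q \<longrightarrow> v \<in> sphere z r" by blast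
    qed
    have nf: "normal_fan Q = \<F>"
    proof -
      have "normal_fan Q = range (Mc (\<psi> ` V))" unfolding Q_def hull_eq by (rule NF_repr[OF finpsi nepsi])
      also have "\<dots> = range (Mc V)" using compat_Mc[OF cpsi ipsi] by simp
      finally show ?thesis using FM by simp
    qed
    have inv: "g ` Q = Q" if g: "g \<in> G" for g
    proof -
      have lin: "linear g" using og[OF g] by (rule orthogonal_transformation_linear)
      have injg: "inj g" using og[OF g] by (rule orthogonal_transformation_inj)
      have surjg: "surj g" using og[OF g] by (rule orthogonal_transformation_surj)
      have imOs: "(\<lambda>U. g ` U) ` Os = Os"
      proof
        show "(\<lambda>U. g ` U) ` Os \<subseteq> Os"
        proof
          fix U' assume "U' \<in> (\<lambda>U. g ` U) ` Os"
          then obtain h where "h \<in> G" "U' = g ` h ` V" by (auto simp: Os_def)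
          then have "U' = (g \<circ> h) ` V" "g \<circ> h \<in> G" using compG[OF g] by (auto simp: image_comp)
          then show "U' \<in> Os" unfolding Os_def by (metis imageI)
        qed
        show "Os \<subseteq> (\<lambda>U. g ` U) ` Os"
        proof
          fix U assume "U \<in> Os"
          then obtain h where h: "h \<in> G" "U = h ` V" by (auto simp: Os_def)
          have "(inv g \<circ> h) ` V \<in> Os" unfolding Os_def using compG[OF invG[OF g] h(1)] by (rule imageI)
          moreover have "g ` (inv g \<circ> h) ` V = U"
            using h(2) surj_f_inv_f[OF surjg] by (auto simp: image_comp comp_def)
          ultimately show "U \<in> (\<lambda>U. g ` U) ` Os" by (metis imageI)
        qed
      qed
      have injO: "inj_on (\<lambda>U. g ` U) Os"
        using injg by (auto simp: inj_on_def inj_image_eq_iff)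
      have "g ` (\<Sum>U\<in>Os. U) = (\<Sum>U\<in>Os. g ` U)" by (rule linear_image_setsum[OF lin finOs])
      also have "\<dots> = (\<Sum>U\<in>(\<lambda>U. g ` U) ` Os. U)" by (simp add: sum.reindex[OF injO] comp_def)
      also have "\<dots> = (\<Sum>U\<in>Os. U)" using imOs by simp
      finally show ?thesis unfolding Q_def using convex_hull_linear_image[OF lin] by metis
    qed
    show ?thesis using insc nf inv by blast
  qed
qed


end
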